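(* Let $(P_n(x))_{n\ge0}$ be a sequence of polynomials such that $\sum_{n\ge0}P_n(x)\frac{t^n}{n!}=f(t)e^{xt}$ for some $f$ holomorphic at $0$ with $f(0)\neq0$, and such that $P_n(1-x)=(-1)^nP_n(x)$ for all $n\ge0$. Let $N$ be a positive integer. If the function $F(t)=f(t)-\sum_{k=0}^{N}E_k(0)\frac{t^k}{k!}$ is odd, then $P_n(x)=E_n(x)$ for all $n\ge0$ and $f(t)=\frac{2}{e^t+1}$.
   Context: $E_n(x)$ denotes the Euler polynomials, defined by $\sum_{n\ge0}E_n(x)\frac{t^n}{n!}=\frac{2e^{xt}}{e^t+1}$. *)

theory Defs
  imports "HOL-Analysis.Analysis" "HOL-Computational_Algebra.Polynomial"
    "HOL-Computational_Algebra.Formal_Power_Series"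
begin

definition euler_polynomial :: "nat \<Rightarrow> complex \<Rightarrow> complex" where
  "euler_polynomial n x =
     fact n * fps_nth (2 * fps_exp x / (fps_exp 1 + 1)) n"

end

theory Submission imports Defs "HOL-Complex_Analysis.Laurent_Convergence" begin

lemma G_sym:
  fixes k :: nat
  defines "G \<equiv> (2 / (fps_exp 1 + 1) :: complex fps)"
  shows "fps_nth G k + (-1)^k * fps_nth G k = (if k = 0 then 2 else 0)"
proof -
  define A where "A = (fps_exp 1 :: complex fps)"
  define B where "B = (fps_exp (-1) :: complex fps)"
  have AB: "A * B = 1" unfolding A_def B_def
    by (metis add.right_inverse fps_exp_add_mult fps_exp_0)
  have A1: "fps_nth (A + 1) 0 \<noteq> 0" by (simp add: A_def)
  have B1: "fps_nth (B + 1) 0 \<noteq> 0" by (simp add: B_def)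
  have GA: "G * (A + 1) = 2" unfolding G_def A_def[symmetric]
    using A1 by (simp add: fps_divide_unit inverse_mult_eq_1 mult.assoc)
  define G' where "G' = fps_compose G (- fps_X)"
  have "fps_compose (G * (A + 1)) (- fps_X) = G' * (B + 1)"
    unfolding G'_def
    by (simp add: fps_compose_mult_distrib fps_compose_add_distrib A_def B_def)
  moreover have "fps_compose (2::complex fps) (- fps_X) = 2"
    by (metis one_add_one fps_compose_add_distrib fps_compose_1)
  ultimately have GB: "G' * (B + 1) = 2" using GA by simp
  have "(G + G') * (A + 1) = 2 * (A + 1)"
  proof -
    have "G' * (A + 1) = G' * (B + 1) * A"
      using AB by (simp add: algebra_simps)
    also have "\<dots> = 2 * A" using GB by simp
    finally have "G' * (A + 1) = 2 * A" .
    then show ?thesis using GA by (simp add: algebra_simps)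
  qed
  moreover have "A + 1 \<noteq> 0" using A1 by (metis fps_zero_nth)
  ultimately have "G + G' = 2" by (metis mult_right_cancel)
  hence "fps_nth (G + G') k = fps_nth (2::complex fps) k" by simp
  moreover have "fps_nth G' k = (-1)^k * fps_nth G k"
    unfolding G'_def fps_compose_uminus' by simp
  ultimately show ?thesis by (simp add: numeral_fps_const)
qed

theorem mainTheorem6:
  fixes P :: "nat \<Rightarrow> complex poly" and f :: "complex \<Rightarrow> complex" and N :: nat
  assumes hol: "f analytic_on {0}"
    and f0: "f 0 \<noteq> 0"
    and gen: "\<exists>r>0. \<forall>x t. norm t < r \<longrightarrow>
                 (\<lambda>n. poly (P n) x * t ^ n / fact n) sums (f t * exp (x * t))"
    and symm: "\<And>n x. poly (P n) (1 - x) = (-1) ^ n * poly (P n) x"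
    and Npos: "N > 0"
    and odd: "\<forall>\<^sub>F t in nhds 0.
       f (- t) - (\<Sum>k\<le>N. euler_polynomial k 0 * (- t) ^ k / fact k)
         = - (f t - (\<Sum>k\<le>N. euler_polynomial k 0 * t ^ k / fact k))"
  shows "(\<forall>n x. poly (P n) x = euler_polynomial n x)
         \<and> (\<forall>\<^sub>F t in nhds 0. f t = 2 / (exp t + 1))"
proof -
  obtain r where r: "r > 0" and R: "\<And>x t. norm t < r \<Longrightarrow>
       (\<lambda>n. poly (P n) x * t ^ n / fact n) sums (f t * exp (x * t))"
    using gen by blast
  have rfl: "f t * exp t = f (- t)" if "norm t < r" for t
  proof -
    have s1: "(\<lambda>n. poly (P n) 1 * t ^ n / fact n) sums (f t * exp (1 * t))"
      by (rule R) (rule that)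
    have e: "(\<lambda>n. poly (P n) 1 * t ^ n / fact n) = (\<lambda>n. poly (P n) 0 * (- t) ^ n / fact n)"
    proof
      fix n
      have "poly (P n) 1 = (-1)^n * poly (P n) 0" using symm[of n 0] by (simp only: diff_zero)
      moreover have "(- t) ^ n = (-1) ^ n * t ^ n" by (rule power_minus)
      ultimately show "poly (P n) 1 * t ^ n / fact n = poly (P n) 0 * (- t) ^ n / fact n"
        by (simp add: mult_ac)
    qed
    have s2: "(\<lambda>n. poly (P n) 0 * (- t) ^ n / fact n) sums (f (- t) * exp (0 * (- t)))"
      by (rule R) (simp add: that)
    have "f t * exp (1 * t) = f (- t) * exp (0 * (- t))"
      using sums_unique2[OF s1[unfolded e] s2] .
    thus ?thesis by simp
  qed
  define G where "G = (2 / (fps_exp 1 + 1) :: complex fps)"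
  have eu: "euler_polynomial k 0 = fact k * fps_nth G k" for k
    unfolding euler_polynomial_def G_def by (simp only: fps_exp_0 mult.right_neutral)
  define S where "S t = (\<Sum>k\<le>N. euler_polynomial k 0 * t ^ k / fact k)" for t :: complex
  have S2: "S t + S (- t) = 2" for t
  proof -
    have "S t + S (- t) = (\<Sum>k\<le>N. euler_polynomial k 0 * t ^ k / fact k + euler_polynomial k 0 * (- t) ^ k / fact k)"
      by (simp add: S_def sum.distrib)
    also have "\<dots> = (\<Sum>k\<le>N. (fps_nth G k + (-1)^k * fps_nth G k) * t ^ k)"
      by (rule sum.cong[OF HOL.refl]) (simp add: eu power_minus[of t] divide_simps algebra_simps)
    also have "\<dots> = (\<Sum>k\<le>N. (if k = 0 then 2 else 0) * t ^ k)"
      unfolding G_def by (rule sum.cong[OF HOL.refl]) (simp only: G_sym)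
    also have "\<dots> = 2" by (induction N) auto
    finally show ?thesis .
  qed
  have ev_r: "\<forall>\<^sub>F t in nhds 0. norm (t::complex) < r"
    using eventually_nhds_in_open[of "ball (0::complex) r" 0] r by (simp add: dist_0_norm)
  have "((\<lambda>t. exp t + 1) \<longlongrightarrow> exp 0 + (1::complex)) (nhds 0)"
  proof -
    have "isCont (\<lambda>t::complex. exp t + 1) 0" by (intro continuous_intros)
    hence "(\<lambda>t::complex. exp t + 1) \<midarrow>0\<rightarrow> exp 0 + 1" by (simp add: isCont_def)
    thus ?thesis using tendsto_at_iff_tendsto_nhds[of "\<lambda>t::complex. exp t + 1" 0] by simp
  qed
  hence ev_ne: "\<forall>\<^sub>F t in nhds 0. exp t + 1 \<noteq> (0::complex)"
    by (rule tendsto_imp_eventually_ne) simp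
  have fE: "\<forall>\<^sub>F t in nhds 0. f t = 2 / (exp t + 1)"
    using odd ev_r ev_ne
  proof eventually_elim
    case (elim t)
    have "f t + f (- t) = S t + S (- t)" using elim(1) unfolding S_def by (simp add: algebra_simps)
    hence "f t + f t * exp t = 2" using S2 rfl[OF elim(2)] by simp
    hence "f t * (exp t + 1) = 2" by (simp add: algebra_simps)
    thus ?case using elim(3) by (simp add: field_simps)
  qed
  have "poly (P n) x = euler_polynomial n x" for n x
  proof -
    define C where "C = Abs_fps (\<lambda>n. poly (P n) x / fact n)"
    have h1: "(\<lambda>t. f t * exp (x * t)) has_fps_expansion C"
      unfolding C_def
    proof (rule has_fps_expansionI)
      show "\<forall>\<^sub>F u in nhds 0. (\<lambda>n. fps_nth (Abs_fps (\<lambda>n. poly (P n) x / fact n)) n * u ^ n) sums (f u * exp (x * u))"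
        using ev_r by eventually_elim (use R in simp)
    qed
    have h2: "(\<lambda>t. 2 * exp (x * t) / (exp t + 1)) has_fps_expansion (2 * fps_exp x / (fps_exp 1 + 1))"
      by (rule has_fps_expansion_divide'[OF has_fps_expansion_mult[OF has_fps_expansion_numeral has_fps_expansion_exp]
            has_fps_expansion_add[OF has_fps_expansion_exp1 has_fps_expansion_1]]) simp
    have "\<forall>\<^sub>F t in nhds 0. f t * exp (x * t) = 2 * exp (x * t) / (exp t + 1)"
      using fE by eventually_elim simp
    hence "(\<lambda>t. f t * exp (x * t)) has_fps_expansion (2 * fps_exp x / (fps_exp 1 + 1))"
      using h2 has_fps_expansion_cong[OF _ HOL.refl] by metis
    hence "C = 2 * fps_exp x / (fps_exp 1 + 1)"
      using h1 fps_expansion_unique_complex by blast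
    hence "fps_nth C n = fps_nth (2 * fps_exp x / (fps_exp 1 + 1)) n" by (rule arg_cong)
    moreover have "fps_nth C n = poly (P n) x / fact n" unfolding C_def by (simp only: fps_nth_Abs_fps)
    ultimately have "poly (P n) x / fact n = fps_nth (2 * fps_exp x / (fps_exp 1 + 1)) n" by simp
    hence "poly (P n) x = fact n * fps_nth (2 * fps_exp x / (fps_exp 1 + 1)) n"
      by (metis fact_nonzero nonzero_mult_div_cancel_left of_nat_eq_0_iff times_divide_eq_right)
    thus ?thesis unfolding euler_polynomial_def .
  qed
  with fE show ?thesis by blast
qed

end
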